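(* For every $d\ge2$, $B_{d,3}(1,1)=3$.
   Context: $T_{d,3}=\bigoplus_{\ell=0}^3(\mathbb{R}^d)^{\otimes\ell}$ is the truncated tensor algebra with product the bilinear extension of the tensor product of levels, set to $0$ when the total level exceeds $3$. $\mathfrak{g}_{d,3}$ is the smallest Lie subalgebra (commutator bracket) containing $e_1,\dots,e_d$; $\exp(\mathbf{z})=\sum_{\ell=0}^3\mathbf{z}^{\otimes\ell}/\ell!$; $\mathcal{G}_{d,3}=\exp(\mathfrak{g}_{d,3})$ (a group), $\log=\exp^{-1}$. For $\mathbf{x}\in\mathcal{G}_{d,3}^N$, $\mathsf{bary}(\mathbf{x})$ is the unique $\mathbf{m}$ with $\sum_i\log(\mathbf{m}^{-1}\mathbf{x}_i)=0$. For a path $X:[0,1]\to\mathbb{R}^d$ its $3$-truncated signature $\sigma(X)\in\mathcal{G}_{d,3}$ has $\sigma^{(0)}=1$ and $\sigma^{(\ell)}_{w_1\dots w_\ell}=\int_{0<t_1<\dots<t_\ell<1}\dot X_{w_1}(t_1)\cdots\dot X_{w_\ell}(t_\ell)\,dt$. $\mathcal{L}^{\mathrm{im}}_{d,\le 3,m}$ is the set of $\sigma(X)$ for piecewise linear $X:[0,1]\to\mathbb{R}^d$ with $m$ segments, and $B_{d,3}(\alpha)=\min\{m\in\mathbb{N}:\mathsf{bary}(\mathcal{L}^{\mathrm{im}}_{d,\le 3,\alpha_1}\times\dots\times\mathcal{L}^{\mathrm{im}}_{d,\le 3,\alpha_N})\subseteq\mathcal{L}^{\mathrm{im}}_{d,\le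 3,m}\}$. *)

theory Defs
  imports "HOL-Analysis.Analysis"
begin

text \<open>Truncated tensor algebra T_{d,3}: an element is a coefficient function on words
  over the alphabet 'd (the basis e_w of tensors, w a word), vanishing on words of length > 3.\<close>

type_synonym 'd tens = "'d list \<Rightarrow> real"

definition Tset :: "'d tens set" where
  "Tset = {x. \<forall>w. 3 < length w \<longrightarrow> x w = 0}"

definition tzero :: "'d tens" where "tzero = (\<lambda>w. 0)"
definition tone :: "'d tens" where "tone = (\<lambda>w. if w = [] then 1 else 0)"
definition tbasis :: "'d \<Rightarrow> 'd tens" where "tbasis i = (\<lambda>w. if w = [i] then 1 else 0)"
definition tadd :: "'d tens \<Rightarrow> 'd tens \<Rightarrow> 'd tens" where "tadd x y = (\<lambda>w. x w + y w)"
definition tsub :: "'d tens \<Rightarrow> 'd tens \<Rightarrow> 'd tens" where "tsub x y = (\<lambda>w. x w - y w)"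
definition tscale :: "real \<Rightarrow> 'd tens \<Rightarrow> 'd tens" where "tscale c x = (\<lambda>w. c * x w)"

definition tmul :: "'d tens \<Rightarrow> 'd tens \<Rightarrow> 'd tens" where
  "tmul x y = (\<lambda>w. if length w \<le> 3
      then (\<Sum>k\<in>{0..length w}. x (take k w) * y (drop k w)) else 0)"

definition tbracket :: "'d tens \<Rightarrow> 'd tens \<Rightarrow> 'd tens" where
  "tbracket x y = tsub (tmul x y) (tmul y x)"

text \<open>The free step-3 nilpotent Lie algebra g_{d,3}: the smallest Lie subalgebra
  (linear subspace closed under the commutator) containing e_1, ..., e_d.\<close>
inductive_set lie_gen :: "'d tens set" where
  gen: "tbasis i \<in> lie_gen"
| add: "x \<in> lie_gen \<Longrightarrow> y \<in> lie_gen \<Longrightarrow> tadd x y \<in> lie_gen"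
| scale: "x \<in> lie_gen \<Longrightarrow> tscale c x \<in> lie_gen"
| bracket: "x \<in> lie_gen \<Longrightarrow> y \<in> lie_gen \<Longrightarrow> tbracket x y \<in> lie_gen"

definition texp :: "'d tens \<Rightarrow> 'd tens" where
  "texp z = tadd (tadd (tadd tone z) (tscale (1/2) (tmul z z)))
                 (tscale (1/6) (tmul z (tmul z z)))"

definition Ggrp :: "'d tens set" where "Ggrp = texp ` lie_gen"

definition tlog :: "'d tens \<Rightarrow> 'd tens" where "tlog = inv_into lie_gen texp"

definition tinv :: "'d tens \<Rightarrow> 'd tens" where
  "tinv x = (THE y. y \<in> Tset \<and> tmul x y = tone \<and> tmul y x = tone)"

definition bary :: "'d tens list \<Rightarrow> 'd tens" where
  "bary xs = (THE m. m \<in> Ggrp \<and>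
      (\<forall>w. (\<Sum>i<length xs. tlog (tmul (tinv m) (xs ! i)) w) = 0))"

definition pw_linear :: "nat \<Rightarrow> (real \<Rightarrow> real^'d) \<Rightarrow> bool" where
  "pw_linear m X \<longleftrightarrow> (\<exists>t :: nat \<Rightarrow> real. t 0 = 0 \<and> t m = 1 \<and>
      (\<forall>i<m. t i < t (Suc i)) \<and>
      (\<forall>i<m. \<exists>a b :: real^'d. \<forall>s\<in>{t i..t (Suc i)}. X s = a + s *\<^sub>R b))"

text \<open>Iterated integrals: it_int X [w_k,...,w_1] t =
  int_{0<t_1<...<t_k<t} dX_{w_1}(t_1) ... dX_{w_k}(t_k) (word given reversed).\<close>
fun it_int :: "(real \<Rightarrow> real^'d) \<Rightarrow> 'd list \<Rightarrow> real \<Rightarrow> real" where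
  "it_int X [] t = 1"
| "it_int X (w # ws) t =
     integral {0..t} (\<lambda>s. it_int X ws s * (vector_derivative X (at s) $ w))"

definition sig3 :: "(real \<Rightarrow> real^'d) \<Rightarrow> 'd tens" where
  "sig3 X = (\<lambda>w. if length w \<le> 3 then it_int X (rev w) 1 else 0)"

definition Lim :: "nat \<Rightarrow> ('d::finite) tens set" where
  "Lim m = {sig3 X | X. pw_linear m X}"

definition Bd3 :: "nat list \<Rightarrow> ('d::finite) itself \<Rightarrow> nat" where
  "Bd3 \<alpha> _ = (LEAST m. bary ` {xs. length xs = length \<alpha> \<and>
        (\<forall>i<length \<alpha>. xs ! i \<in> (Lim (\<alpha> ! i) :: 'd tens set))} \<subseteq> (Lim m :: 'd tens set))"

end

theory Submission
  imports Defs
begin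

lemma tmul_nil[simp]: "tmul x y [] = x [] * y []"
  by (simp add: tmul_def)
lemma tmul_1[simp]: "tmul x y [a] = x [] * y [a] + x [a] * y []"
  by (simp add: tmul_def atLeast0AtMost atMost_Suc)
lemma tmul_2[simp]: "tmul x y [a,b] = x [] * y [a,b] + x [a] * y [b] + x [a,b] * y []"
  by (simp add: tmul_def atLeast0AtMost atMost_Suc)
lemma tmul_3[simp]: "tmul x y [a,b,c] = x [] * y [a,b,c] + x [a] * y [b,c] + x [a,b] * y [c] + x [a,b,c] * y []"
  by (simp add: tmul_def atLeast0AtMost atMost_Suc)
lemma tmul_long: "3 < length w \<Longrightarrow> tmul x y w = 0"
  by (simp add: tmul_def)

lemma tadd_ap[simp]: "tadd x y w = x w + y w" by (simp add: tadd_def)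
lemma tsub_ap[simp]: "tsub x y w = x w - y w" by (simp add: tsub_def)
lemma tscale_ap[simp]: "tscale c x w = c * x w" by (simp add: tscale_def)
lemma tzero_ap[simp]: "tzero w = 0" by (simp add: tzero_def)
lemma tbracket_ap[simp]: "tbracket x y w = tmul x y w - tmul y x w" by (simp add: tbracket_def)

lemma tone_simps[simp]: "tone [] = 1" "tone (a#w) = 0" by (simp_all add: tone_def)
lemma tbasis_simps[simp]: "tbasis i [] = 0" "tbasis i [a] = (if a = i then 1 else 0)"
   "tbasis i (a#b#w) = 0" by (simp_all add: tbasis_def)

lemma Tset_iff: "x \<in> Tset \<longleftrightarrow> (\<forall>w. 3 < length w \<longrightarrow> x w = 0)" by (simp add: Tset_def)

lemma Tset_intros[simp]: "tmul x y \<in> Tset" "tbracket x y \<in> Tset" "tone \<in> Tset" "tzero \<in> Tset"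
  "tbasis i \<in> Tset"
  "x \<in> Tset \<Longrightarrow> y \<in> Tset \<Longrightarrow> tadd x y \<in> Tset"
  "x \<in> Tset \<Longrightarrow> y \<in> Tset \<Longrightarrow> tsub x y \<in> Tset"
  "x \<in> Tset \<Longrightarrow> tscale c x \<in> Tset"
  by (auto simp: Tset_iff tmul_long tone_def tbasis_def)

lemma texp_Tset[simp]: "z \<in> Tset \<Longrightarrow> texp z \<in> Tset"
  by (simp add: texp_def)

lemma tens_eqI:
  assumes "x \<in> Tset" "y \<in> Tset" "x [] = y []" "\<And>a. x [a] = y [a]" "\<And>a b. x [a,b] = y [a,b]"
    "\<And>a b c. x [a,b,c] = y [a,b,c]"
  shows "x = y"
proof
  fix w show "x w = y w"
  proof (cases w)
    case Nil then show ?thesis using assms by simp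
  next
    case (Cons a w1) show ?thesis
    proof (cases w1)
      case Nil then show ?thesis using assms Cons by simp
    next
      case (Cons b w2) show ?thesis
      proof (cases w2)
        case Nil then show ?thesis using assms Cons \<open>w = a # w1\<close> by simp
      next
        case (Cons c w3) show ?thesis
        proof (cases w3)
          case Nil then show ?thesis using assms Cons \<open>w = a # w1\<close> \<open>w1 = b # w2\<close> by simp
        next
          case (Cons d w4)
          then have "3 < length w" using \<open>w = a # w1\<close> \<open>w1 = b # w2\<close> \<open>w2 = c # w3\<close> by simp
          then show ?thesis using assms(1,2) by (simp add: Tset_iff)
        qed
      qed
    qed
  qed
qed

definition nil :: "'d tens \<Rightarrow> bool" where "nil z \<longleftrightarrow> z \<in> Tset \<and> z [] = 0"

lemma tmul_assoc: "tmul (tmul x y) z = tmul x (tmul y z)"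
  by (rule tens_eqI) (simp_all add: algebra_simps)

lemma tmul_one_left[simp]: "x \<in> Tset \<Longrightarrow> tmul tone x = x"
  by (rule tens_eqI) simp_all
lemma tmul_one_right[simp]: "x \<in> Tset \<Longrightarrow> tmul x tone = x"
  by (rule tens_eqI) simp_all

definition tlg :: "'d tens \<Rightarrow> 'd tens" where
  "tlg x = (let y = tsub x tone in tadd (tsub y (tscale (1/2) (tmul y y))) (tscale (1/3) (tmul y (tmul y y))))"

lemma texp_ap: "texp z w = tone w + z w + 1/2 * tmul z z w + 1/6 * tmul z (tmul z z) w"
  by (simp add: texp_def)

lemma tlg_texp: "nil z \<Longrightarrow> tlg (texp z) = z"
  unfolding nil_def
  by (rule tens_eqI) (simp_all add: tlg_def texp_def Let_def algebra_simps)


definition bch :: "'d tens \<Rightarrow> 'd tens \<Rightarrow> 'd tens" where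
  "bch X Y = tadd (tadd (tadd X Y) (tscale (1/2) (tbracket X Y)))
     (tadd (tscale (1/12) (tbracket X (tbracket X Y))) (tscale (1/12) (tbracket Y (tbracket Y X))))"

lemma bch_Tset[simp]: "X \<in> Tset \<Longrightarrow> Y \<in> Tset \<Longrightarrow> bch X Y \<in> Tset"
  by (simp add: bch_def)

lemma nil_bch: "nil X \<Longrightarrow> nil Y \<Longrightarrow> nil (bch X Y)"
  by (simp add: nil_def bch_def)

lemma bch_thm: assumes "nil X" "nil Y" shows "tmul (texp X) (texp Y) = texp (bch X Y)"
proof -
  have x: "X [] = 0" "X \<in> Tset" and y: "Y [] = 0" "Y \<in> Tset" using assms by (auto simp: nil_def)
  show ?thesis
    by (rule tens_eqI) (simp_all add: x y texp_def bch_def field_simps)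
qed

lemma texp_scale: assumes "nil z"
  shows "tmul (texp (tscale a z)) (texp (tscale b z)) = texp (tscale (a+b) z)"
proof -
  have x: "z [] = 0" "z \<in> Tset" using assms by (auto simp: nil_def)
  show ?thesis
    by (rule tens_eqI) (simp_all add: x texp_def algebra_simps)
qed


lemma lie_nil: "x \<in> lie_gen \<Longrightarrow> nil x"
proof (induction rule: lie_gen.induct)
  case (gen i) then show ?case by (simp add: nil_def)
next
  case (add x y) then show ?case unfolding nil_def using Tset_intros(6)[of x y] by simp
next
  case (scale x c) then show ?case unfolding nil_def using Tset_intros(8)[of x c] by simp
next
  case (bracket x y) then show ?case unfolding nil_def using Tset_intros(2)[of x y] by simp
qed

lemma tsub_lie: "x \<in> lie_gen \<Longrightarrow> y \<in> lie_gen \<Longrightarrow> tsub x y \<in> lie_gen"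
proof -
  assume "x \<in> lie_gen" "y \<in> lie_gen"
  then have "tadd x (tscale (-1) y) \<in> lie_gen" by (intro lie_gen.intros)
  moreover have "tadd x (tscale (-1) y) = tsub x y" by (rule ext) simp
  ultimately show ?thesis by simp
qed

lemma bch_lie: "x \<in> lie_gen \<Longrightarrow> y \<in> lie_gen \<Longrightarrow> bch x y \<in> lie_gen"
  unfolding bch_def by (intro lie_gen.intros)

lemma inj_texp: "inj_on texp lie_gen"
  by (rule inj_onI) (metis lie_nil tlg_texp)

lemma tlog_texp: "z \<in> lie_gen \<Longrightarrow> tlog (texp z) = z"
  unfolding tlog_def by (rule inv_into_f_f[OF inj_texp])

lemma Ggrp_tlog: "g \<in> Ggrp \<Longrightarrow> tlog g \<in> lie_gen \<and> texp (tlog g) = g"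
  unfolding Ggrp_def tlog_def using f_inv_into_f[of g texp lie_gen] inv_into_into[of g texp lie_gen] by blast

lemma texp_inv1: "nil z \<Longrightarrow> tmul (texp z) (texp (tscale (-1) z)) = tone"
  unfolding nil_def by (rule tens_eqI) (simp_all add: texp_def algebra_simps)
lemma texp_inv2: "nil z \<Longrightarrow> tmul (texp (tscale (-1) z)) (texp z) = tone"
  unfolding nil_def by (rule tens_eqI) (simp_all add: texp_def algebra_simps)

lemma tinv_texp: assumes "nil z" shows "tinv (texp z) = texp (tscale (-1) z)"
  unfolding tinv_def
proof (rule the_equality)
  have zT: "z \<in> Tset" using assms by (simp add: nil_def)
  show "texp (tscale (-1) z) \<in> Tset \<and> tmul (texp z) (texp (tscale (-1) z)) = tone \<and>
    tmul (texp (tscale (-1) z)) (texp z) = tone"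
    using texp_inv1[OF assms] texp_inv2[OF assms] zT by simp
  fix y assume y: "y \<in> Tset \<and> tmul (texp z) y = tone \<and> tmul y (texp z) = tone"
  have "y = tmul (tmul (texp (tscale (-1) z)) (texp z)) y" using texp_inv2[OF assms] y by simp
  also have "\<dots> = texp (tscale (-1) z)" using y zT by (simp add: tmul_assoc)
  finally show "y = texp (tscale (-1) z)" .
qed

definition lvl1 :: "real^'d \<Rightarrow> 'd tens" where
  "lvl1 c = (\<lambda>w. case w of [a] \<Rightarrow> c $ a | _ \<Rightarrow> 0)"

lemma lvl1_simps[simp]: "lvl1 c [] = 0" "lvl1 c [a] = c $ a" "lvl1 c (a#b#w) = 0"
  by (simp_all add: lvl1_def)

lemma lvl1_Tset[simp]: "lvl1 c \<in> Tset"
  by (auto simp: Tset_iff lvl1_def split: list.split)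

lemma lvl1_nil[simp]: "nil (lvl1 c)" by (simp add: nil_def)

lemma lvl1_lie_aux: "finite S \<Longrightarrow> (\<lambda>w. case w of [a] \<Rightarrow> (if a \<in> S then c $ a else 0) | _ \<Rightarrow> 0) \<in> lie_gen"
proof (induction rule: finite_induct)
  case empty
  have "tscale 0 (tbasis undefined) \<in> lie_gen" by (intro lie_gen.intros)
  moreover have "tscale 0 (tbasis undefined) = (\<lambda>w. case w of [a] \<Rightarrow> (if a \<in> {} then c $ a else 0) | _ \<Rightarrow> 0)"
    by (rule ext) (simp split: list.split)
  ultimately show ?case by (metis (no_types))
next
  case (insert x S)
  have "tadd (\<lambda>w. case w of [a] \<Rightarrow> (if a \<in> S then c $ a else 0) | _ \<Rightarrow> 0) (tscale (c$x) (tbasis x)) \<in> lie_gen"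
    using insert by (intro lie_gen.intros)
  moreover have "tadd (\<lambda>w. case w of [a] \<Rightarrow> (if a \<in> S then c $ a else 0) | _ \<Rightarrow> 0) (tscale (c$x) (tbasis x))
     = (\<lambda>w. case w of [a] \<Rightarrow> (if a \<in> insert x S then c $ a else 0) | _ \<Rightarrow> 0)"
    using insert by (intro ext) (auto simp: tbasis_def split: list.split)
  ultimately show ?case by simp
qed

lemma lvl1_lie: "lvl1 (c::real^'d::finite) \<in> lie_gen"
  using lvl1_lie_aux[of "UNIV::'d set" c] by (simp add: lvl1_def)


definition mu0 :: "real^'d \<Rightarrow> real^'d \<Rightarrow> 'd tens" where
  "mu0 c1 c2 = tadd (lvl1 ((1/2) *\<^sub>R (c1 + c2)))
     (tscale (1/48) (tsub (tbracket (lvl1 c2) (tbracket (lvl1 c1) (lvl1 c2)))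
                          (tbracket (lvl1 c1) (tbracket (lvl1 c1) (lvl1 c2)))))"

definition Pt :: "real^'d \<Rightarrow> real^'d \<Rightarrow> 'd tens" where
  "Pt c1 c2 = tmul (tmul (texp (lvl1 c1)) (texp (lvl1 (-(3/4) *\<^sub>R c1 - (1/4) *\<^sub>R c2))))
      (texp (lvl1 ((1/4) *\<^sub>R c1 + (3/4) *\<^sub>R c2)))"

lemma mu0_Tset[simp]: "mu0 c1 c2 \<in> Tset" by (simp add: mu0_def)

lemma mu0_lie: "mu0 (c1::real^'d::finite) c2 \<in> lie_gen"
  unfolding mu0_def by (intro lie_gen.intros tsub_lie lvl1_lie)

lemma texp_mu0: "texp (mu0 c1 c2) = Pt c1 c2"
  by (rule tens_eqI) (simp_all add: mu0_def Pt_def texp_def field_simps)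

lemma cond_mu0: "tadd (bch (tscale (-1) (mu0 c1 c2)) (lvl1 c1)) (bch (tscale (-1) (mu0 c1 c2)) (lvl1 c2)) = tzero"
  by (rule tens_eqI) (simp_all add: mu0_def bch_def field_simps)


lemma cond_unique:
  assumes "nil \<mu>" and K: "\<And>w. bch (tscale (-1) \<mu>) (lvl1 c1) w + bch (tscale (-1) \<mu>) (lvl1 c2) w = 0"
  shows "\<mu> = mu0 c1 c2"
proof -
  have m0: "\<mu> [] = 0" and mT: "\<mu> \<in> Tset" using assms by (auto simp: nil_def)
  have h1: "\<mu> [a] = (c1$a + c2$a)/2" for a
    using K[of "[a]"] m0 by (simp add: bch_def)
  have h2: "\<mu> [a,b] = 0" for a b
    using K[of "[a,b]"] m0 h1[of a] h1[of b] by (simp add: bch_def field_simps)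
  have h3: "\<mu> [a,b,c] = mu0 c1 c2 [a,b,c]" for a b c
    using K[of "[a,b,c]"] m0 h1[of a] h1[of b] h1[of c] h2[of a b] h2[of b c]
    by (simp add: bch_def mu0_def field_simps)
  show ?thesis
    by (rule tens_eqI) (simp_all add: mT m0 h1 h2 h3, simp_all add: mu0_def field_simps)
qed

lemma bary_lvl1: "bary [texp (lvl1 c1), texp (lvl1 (c2::real^'d::finite))] = Pt c1 c2"
  unfolding bary_def
proof (rule the_equality)
  have key: "tlog (tmul (tinv (texp \<mu>)) (texp (lvl1 c))) = bch (tscale (-1) \<mu>) (lvl1 c)"
    if "\<mu> \<in> lie_gen" for \<mu> and c :: "real^'d"
  proof -
    have n: "nil \<mu>" using lie_nil that by blast
    have n2: "nil (tscale (-1) \<mu>)" using n by (simp add: nil_def)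
    have "tmul (tinv (texp \<mu>)) (texp (lvl1 c)) = texp (bch (tscale (-1) \<mu>) (lvl1 c))"
      using tinv_texp[OF n] bch_thm[OF n2 lvl1_nil] by simp
    moreover have "bch (tscale (-1) \<mu>) (lvl1 c) \<in> lie_gen"
      using that by (intro bch_lie lie_gen.intros lvl1_lie)
    ultimately show ?thesis by (simp add: tlog_texp)
  qed
  show "Pt c1 c2 \<in> Ggrp \<and> (\<forall>w. (\<Sum>i<length [texp (lvl1 c1), texp (lvl1 c2)].
      tlog (tmul (tinv (Pt c1 c2)) ([texp (lvl1 c1), texp (lvl1 c2)] ! i)) w) = 0)"
  proof
    show "Pt c1 c2 \<in> Ggrp" unfolding Ggrp_def using mu0_lie texp_mu0 by (metis image_eqI)
    show "\<forall>w. (\<Sum>i<length [texp (lvl1 c1), texp (lvl1 c2)].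
      tlog (tmul (tinv (Pt c1 c2)) ([texp (lvl1 c1), texp (lvl1 c2)] ! i)) w) = 0"
      using key[OF mu0_lie, of c1 c2 c1] key[OF mu0_lie, of c1 c2 c2] cond_mu0[of c1 c2]
      by (simp add: texp_mu0[symmetric] fun_eq_iff)
  qed
  fix m assume m: "m \<in> Ggrp \<and> (\<forall>w. (\<Sum>i<length [texp (lvl1 c1), texp (lvl1 c2)].
      tlog (tmul (tinv m) ([texp (lvl1 c1), texp (lvl1 c2)] ! i)) w) = 0)"
  define \<mu> where "\<mu> = tlog m"
  have mu: "\<mu> \<in> lie_gen" "texp \<mu> = m" using Ggrp_tlog m \<mu>_def by auto
  have "\<And>w. bch (tscale (-1) \<mu>) (lvl1 c1) w + bch (tscale (-1) \<mu>) (lvl1 c2) w = 0"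
    using m key[OF mu(1), of c1] key[OF mu(1), of c2] mu(2) by simp
  then have "\<mu> = mu0 c1 c2" using cond_unique lie_nil mu(1) by blast
  then show "m = Pt c1 c2" using mu(2) texp_mu0[of c1 c2] by metis
qed


definition run :: "(real \<Rightarrow> real^'d) \<Rightarrow> real \<Rightarrow> 'd tens" where
  "run X t = (\<lambda>w. if length w \<le> 3 then it_int X (rev w) t else 0)"

definition Eb :: "real^'d \<Rightarrow> real \<Rightarrow> 'd tens" where
  "Eb b \<tau> = texp (lvl1 (\<tau> *\<^sub>R b))"

lemma Eb_simps[simp]: "Eb b \<tau> [] = 1" "Eb b \<tau> [x] = \<tau> * b$x"
  "Eb b \<tau> [x,y] = \<tau>^2/2 * (b$x * b$y)" "Eb b \<tau> [x,y,z] = \<tau>^3/6 * (b$x * b$y * b$z)"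
  by (simp_all add: Eb_def texp_def power2_eq_square power3_eq_cube)

lemma Eb_Tset[simp]: "Eb b \<tau> \<in> Tset" by (simp add: Eb_def)
lemma Eb_0: "Eb b 0 = tone"
  by (rule tens_eqI) simp_all

lemma run_Tset[simp]: "run X t \<in> Tset" by (simp add: run_def Tset_iff)

definition Inv :: "(real \<Rightarrow> real^'d) \<Rightarrow> real \<Rightarrow> bool" where
  "Inv X t \<longleftrightarrow> (\<forall>ws w. length ws \<le> 2 \<longrightarrow>
     (\<lambda>s. it_int X ws s * (vector_derivative X (at s) $ w)) integrable_on {0..t})"

lemma deriv_aux:
  assumes "length u \<le> 2"
  shows "((\<lambda>s. tmul P (Eb b (s - t0)) (u @ [w])) has_real_derivative
     (tmul P (Eb b (s - t0)) u * b$w)) (at s)"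
proof -
  consider "u = []" | x where "u = [x]" | x y where "u = [x,y]"
    using assms by (cases u; cases "tl u"; cases "tl (tl u)") auto
  then show ?thesis
  proof cases
    case 1 then show ?thesis
      by (simp, auto intro!: derivative_eq_intros)
  next
    case 2 then show ?thesis
      by (simp, auto intro!: derivative_eq_intros simp: field_simps power2_eq_square)
  next
    case 3 then show ?thesis
      by (simp, auto intro!: derivative_eq_intros simp: field_simps power2_eq_square power3_eq_cube)
  qed
qed

lemma seg:
  fixes X :: "real \<Rightarrow> real^'d::finite"
  assumes t0: "0 \<le> t0" "t0 < t1" and aff: "\<forall>s\<in>{t0..t1}. X s = a + s *\<^sub>R b" and inv: "Inv X t0"
  shows "\<forall>t\<in>{t0..t1}. Inv X t \<and> run X t = tmul (run X t0) (Eb b (t - t0))"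
proof -
  define P where "P = run X t0"
  have vd: "vector_derivative X (at s) = b" if "s \<in> {t0<..<t1}" for s
  proof -
    have "((\<lambda>s. a + s *\<^sub>R b) has_vector_derivative b) (at s)" by (auto intro!: derivative_eq_intros)
    then have "(X has_vector_derivative b) (at s)"
      by (rule has_vector_derivative_transform_within_open[where S="{t0<..<t1}"]) (use that aff in auto)
    then show ?thesis by (rule vector_derivative_at)
  qed
  have A: "((\<lambda>s. it_int X ws s * (vector_derivative X (at s) $ w)) has_integral
             tmul P (Eb b (t - t0)) (rev ws @ [w])) {0..t}"
    if C: "\<forall>t\<in>{t0..t1}. it_int X ws t = tmul P (Eb b (t - t0)) (rev ws)" and len: "length ws \<le> 2"
       and t: "t \<in> {t0..t1}" for ws w t
  proof -
    let ?g = "\<lambda>s. it_int X ws s * (vector_derivative X (at s) $ w)"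
    let ?H = "\<lambda>s. tmul P (Eb b (s - t0)) (rev ws @ [w])"
    let ?h = "\<lambda>s. tmul P (Eb b (s - t0)) (rev ws) * b$w"
    have "(?h has_integral (?H t - ?H t0)) {t0..t}"
      apply (rule fundamental_theorem_of_calculus)
      using t apply simp
      using deriv_aux[of "rev ws" P b t0 w] len
      by (auto simp: has_real_derivative_iff_has_vector_derivative intro: has_vector_derivative_at_within)
    then have I2: "(?g has_integral (?H t - ?H t0)) {t0..t}"
      apply (rule has_integral_spike_finite[where S="{t0,t}", rotated 2])
       apply simp
      using C vd t by auto
    have "?g integrable_on {0..t0}" using inv len unfolding Inv_def by blast
    then have "(?g has_integral it_int X (w#ws) t0) {0..t0}"
      by (simp add: has_integral_integral)
    moreover have "it_int X (w#ws) t0 = ?H t0"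
    proof -
      have "tmul P tone = P" by (simp add: P_def)
      then have "?H t0 = P (rev ws @ [w])" by (simp add: Eb_0)
      then show ?thesis using len by (simp add: P_def run_def)
    qed
    ultimately have I1: "(?g has_integral ?H t0) {0..t0}" by simp
    have "(?g has_integral (?H t0 + (?H t - ?H t0))) {0..t}"
      by (rule has_integral_combine[OF _ _ I1 I2]) (use t t0 in auto)
    then show ?thesis by simp
  qed
  have C: "\<forall>t\<in>{t0..t1}. it_int X ws t = tmul P (Eb b (t - t0)) (rev ws)" if "length ws \<le> 3" for ws
    using that
  proof (induction ws)
    case Nil
    then show ?case by (simp add: P_def run_def)
  next
    case (Cons w ws)
    then have len: "length ws \<le> 2" and IH: "\<forall>t\<in>{t0..t1}. it_int X ws t = tmul P (Eb b (t - t0)) (rev ws)"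
      by auto
    show ?case
    proof
      fix t assume t: "t \<in> {t0..t1}"
      show "it_int X (w # ws) t = tmul P (Eb b (t - t0)) (rev (w # ws))"
        using A[OF IH len t, of w] by (simp add: integral_unique)
    qed
  qed
  show ?thesis
  proof
    fix t assume t: "t \<in> {t0..t1}"
    have "Inv X t" unfolding Inv_def
    proof (intro allI impI)
      fix ws :: "'d list" and w assume len: "length ws \<le> 2"
      then have "length ws \<le> 3" by simp
      from A[OF C[OF this] len t, of w] show "(\<lambda>s. it_int X ws s * (vector_derivative X (at s) $ w)) integrable_on {0..t}"
        by blast
    qed
    moreover have "run X t = tmul P (Eb b (t - t0))"
    proof
      fix w :: "'d list"
      show "run X t w = tmul P (Eb b (t - t0)) w"
      proof (cases "length w \<le> 3")
        case True
        then show ?thesis using C[of "rev w"] t by (simp add: run_def)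
      next
        case False
        then show ?thesis by (simp add: run_def tmul_long)
      qed
    qed
    ultimately show "Inv X t \<and> run X t = tmul (run X t0) (Eb b (t - t0))" by (simp add: P_def)
  qed
qed


fun prodT :: "(nat \<Rightarrow> 'd tens) \<Rightarrow> nat \<Rightarrow> 'd tens" where
  "prodT f 0 = tone"
| "prodT f (Suc i) = tmul (prodT f i) (f i)"

lemma Inv_0: "Inv X 0"
proof -
  have "f integrable_on {0..0::real}" for f :: "real \<Rightarrow> real"
    using has_integral_refl(2)[of f 0] unfolding integrable_on_def by auto
  then show ?thesis unfolding Inv_def by blast
qed

lemma run_0: "run X 0 = tone"
proof
  fix w :: "'a list"
  show "run X 0 w = tone w"
  proof (cases "rev w")
    case Nil then show ?thesis by (simp add: run_def)
  next
    case (Cons x ys)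
    then have "w \<noteq> []" by auto
    then show ?thesis using Cons by (simp add: run_def tone_def neq_Nil_conv)
  qed
qed

lemma pw_sig:
  fixes X :: "real \<Rightarrow> real^'d::finite"
  assumes t0: "t 0 = 0" and tm: "t m = 1" and mono: "\<forall>i<m. t i < t (Suc i)"
    and aff: "\<forall>i<m. \<forall>s\<in>{t i..t (Suc i)}. X s = A i + s *\<^sub>R B i"
  shows "sig3 X = prodT (\<lambda>j. Eb (B j) (t (Suc j) - t j)) m"
proof -
  have "i \<le> m \<longrightarrow> 0 \<le> t i \<and> Inv X (t i) \<and> run X (t i) = prodT (\<lambda>j. Eb (B j) (t (Suc j) - t j)) i" for i
  proof (induction i)
    case 0 then show ?case using t0 Inv_0[of X] run_0[of X] by simp
  next
    case (Suc i)
    show ?case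
    proof
      assume "Suc i \<le> m"
      then have im: "i < m" by simp
      with Suc have IH: "0 \<le> t i" "Inv X (t i)" "run X (t i) = prodT (\<lambda>j. Eb (B j) (t (Suc j) - t j)) i"
        by auto
      have lt: "t i < t (Suc i)" using mono im by simp
      have affi: "\<forall>s\<in>{t i..t (Suc i)}. X s = A i + s *\<^sub>R B i" using aff im by blast
      have S: "\<forall>t'\<in>{t i..t (Suc i)}. Inv X t' \<and> run X t' = tmul (run X (t i)) (Eb (B i) (t' - t i))"
        by (rule seg[OF IH(1) lt affi IH(2)])
      have mem: "t (Suc i) \<in> {t i..t (Suc i)}" using lt by simp
      have "Inv X (t (Suc i)) \<and> run X (t (Suc i)) = tmul (run X (t i)) (Eb (B i) (t (Suc i) - t i))"
        using bspec[OF S mem] .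
      then show "0 \<le> t (Suc i) \<and> Inv X (t (Suc i)) \<and> run X (t (Suc i)) = prodT (\<lambda>j. Eb (B j) (t (Suc j) - t j)) (Suc i)"
        using IH lt by simp
    qed
  qed
  then have "run X (t m) = prodT (\<lambda>j. Eb (B j) (t (Suc j) - t j)) m" by blast
  then show ?thesis using tm by (simp add: sig3_def run_def)
qed

lemma Lim_sub:
  assumes "x \<in> (Lim m :: 'd::finite tens set)"
  shows "\<exists>c. x = prodT (\<lambda>j. texp (lvl1 (c j :: real^'d))) m"
proof -
  obtain X where x: "x = sig3 X" and pw: "pw_linear m X" using assms by (auto simp: Lim_def)
  obtain t where t: "t 0 = 0" "t m = 1" "\<forall>i<m. t i < t (Suc i)"
    and ex: "\<forall>i<m. \<exists>a b :: real^'d. \<forall>s\<in>{t i..t (Suc i)}. X s = a + s *\<^sub>R b"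
    using pw unfolding pw_linear_def by blast
  have "\<forall>i. \<exists>ab. i < m \<longrightarrow> (\<forall>s\<in>{t i..t (Suc i)}. X s = fst ab + s *\<^sub>R snd ab)"
    using ex by (metis fst_conv snd_conv)
  then obtain f where f: "\<forall>i. i < m \<longrightarrow> (\<forall>s\<in>{t i..t (Suc i)}. X s = fst (f i) + s *\<^sub>R snd (f i))"
    by metis
  have "sig3 X = prodT (\<lambda>j. Eb (snd (f j)) (t (Suc j) - t j)) m"
    by (rule pw_sig[OF t, where A = "\<lambda>j. fst (f j)"]) (use f in blast)
  then have "x = prodT (\<lambda>j. texp (lvl1 ((\<lambda>j. (t (Suc j) - t j) *\<^sub>R snd (f j)) j))) m"
    using x by (simp add: Eb_def)
  then show ?thesis
    by (intro exI[where x="\<lambda>j. (t (Suc j) - t j) *\<^sub>R snd (f j)"])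
qed

lemma Lim1: "texp (lvl1 c) \<in> (Lim 1 :: 'd::finite tens set)"
proof -
  let ?X = "\<lambda>s::real. s *\<^sub>R (c::real^'d)"
  have "sig3 ?X = prodT (\<lambda>j. Eb c (real (Suc j) - real j)) 1"
    by (rule pw_sig[where A="\<lambda>_. 0"]) auto
  then have "sig3 ?X = texp (lvl1 c)" by (simp add: Eb_def)
  moreover have "pw_linear 1 ?X"
  proof -
    have "\<forall>i<1. \<exists>a b. \<forall>s\<in>{real i..real (Suc i)}. ?X s = a + s *\<^sub>R b"
    proof (intro allI impI)
      fix i :: nat assume "i < 1"
      show "\<exists>a b. \<forall>s\<in>{real i..real (Suc i)}. ?X s = a + s *\<^sub>R b"
        by (intro exI[of _ 0] exI[of _ c]) simp
    qed
    then show ?thesis unfolding pw_linear_def by (intro exI[where x=real]) simp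
  qed
  ultimately show ?thesis unfolding Lim_def mem_Collect_eq by (intro exI[of _ ?X]) simp
qed


definition ev :: "'d \<Rightarrow> real^'d" where "ev i = (\<chi> k. if k = i then 1 else 0)"
lemma ev_nth[simp]: "ev i $ k = (if k = i then 1 else 0)" by (simp add: ev_def)

lemma no2:
  assumes ij: "i \<noteq> j" and eq: "Pt (ev i) (ev j) = tmul (texp (lvl1 a)) (texp (lvl1 b))"
  shows False
proof -
  have e1: "Pt (ev i) (ev j) [i] = tmul (texp (lvl1 a)) (texp (lvl1 b)) [i]" using eq by simp
  have e2: "Pt (ev i) (ev j) [j] = tmul (texp (lvl1 a)) (texp (lvl1 b)) [j]" using eq by simp
  have e3: "Pt (ev i) (ev j) [i,j] = tmul (texp (lvl1 a)) (texp (lvl1 b)) [i,j]" using eq by simp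
  have e4: "Pt (ev i) (ev j) [j,i] = tmul (texp (lvl1 a)) (texp (lvl1 b)) [j,i]" using eq by simp
  have e5: "Pt (ev i) (ev j) [i,i,j] = tmul (texp (lvl1 a)) (texp (lvl1 b)) [i,i,j]" using eq by simp
  note es = e1 e2 e3 e4 e5
  have f1: "a$i + b$i = 1/2" using e1 ij by (simp add: Pt_def texp_def field_simps)
  have f2: "a$j + b$j = 1/2" using e2 ij by (simp add: Pt_def texp_def field_simps)
  have f34: "a$i * b$j = a$j * b$i" using e3 e4 ij by (simp add: Pt_def texp_def field_simps)
  have f5: "a $ i * (a $ i * a $ j) + (b $ i * (b $ i * b $ j) +
       (a $ i * (a $ i * (b $ j * 3)) + a $ i * (b $ i * (b $ j * 3)))) = 0"
    using e5 ij by (simp add: Pt_def texp_def field_simps)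
  have "a$i * (1/2 - a$j) = a$j * (1/2 - a$i)" using f1 f2 f34 by (metis add_diff_cancel_left')
  moreover have "a$i * (1/2 - a$j) - a$j * (1/2 - a$i) = (a$i - a$j)/2" by (simp add: algebra_simps)
  ultimately have "(a$i - a$j)/2 = 0" by simp
  then have aj: "a$j = a$i" by simp
  then have bj: "b$j = b$i" using f1 f2 by linarith
  have "a $ i * (a $ i * a $ j) + (b $ i * (b $ i * b $ j) +
       (a $ i * (a $ i * (b $ j * 3)) + a $ i * (b $ i * (b $ j * 3)))) = (a$i + b$i)^3"
    unfolding aj bj by (simp add: power3_eq_cube algebra_simps)
  also have "\<dots> = 1/8" unfolding f1 by (simp add: power3_eq_cube)
  finally show False using f5 by simp
qed


lemma Lim3: "tmul (tmul (texp (lvl1 d0)) (texp (lvl1 d1))) (texp (lvl1 d2)) \<in> (Lim 3 :: 'd::finite tens set)"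
proof -
  define X :: "real \<Rightarrow> real^'d" where "X = (\<lambda>s. if s \<le> 1/3 then (3 * s) *\<^sub>R d0
        else if s \<le> 2/3 then d0 + (3 * s - 1) *\<^sub>R d1
        else d0 + d1 + (3 * s - 2) *\<^sub>R d2)"
  define t where "t = (\<lambda>i::nat. real i / 3)"
  define A where "A = (\<lambda>i::nat. if i = 0 then 0 else if i = 1 then d0 - d1 else d0 + d1 - 2 *\<^sub>R d2)"
  define B where "B = (\<lambda>i::nat. if i = 0 then 3 *\<^sub>R d0 else if i = 1 then 3 *\<^sub>R d1 else 3 *\<^sub>R d2)"
  have aff: "\<forall>i<3. \<forall>s\<in>{t i..t (Suc i)}. X s = A i + s *\<^sub>R B i"
  proof (intro allI impI ballI)
    fix i :: nat and s assume i: "i < 3" and s: "s \<in> {t i..t (Suc i)}"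
    then consider "i = 0" | "i = 1" | "i = 2" by linarith
    then show "X s = A i + s *\<^sub>R B i"
    proof cases
      case 1 then show ?thesis using s by (simp add: X_def A_def B_def t_def)
    next
      case 2
      show ?thesis
      proof (cases "s \<le> 1/3")
        case True
        then have "s = 1/3" using s 2 by (simp add: t_def)
        then show ?thesis using 2 by (simp add: X_def A_def B_def algebra_simps)
      next
        case False
        then show ?thesis using 2 s by (simp add: X_def A_def B_def t_def algebra_simps)
      qed
    next
      case 3
      show ?thesis
      proof (cases "s \<le> 2/3")
        case True
        then have "s = 2/3" using s 3 by (simp add: t_def)
        then show ?thesis using 3 by (simp add: X_def A_def B_def algebra_simps)
      next
        case False
        then show ?thesis using 3 s by (simp add: X_def A_def B_def t_def algebra_simps)
      qed
    qed
  qed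
  have t3: "t 0 = 0" "t 3 = 1" "\<forall>i<3. t i < t (Suc i)" by (auto simp: t_def)
  have "sig3 X = prodT (\<lambda>j. Eb (B j) (t (Suc j) - t j)) 3"
    by (rule pw_sig[OF t3 aff])
  also have "\<dots> = tmul (tmul (texp (lvl1 d0)) (texp (lvl1 d1))) (texp (lvl1 d2))"
    by (simp add: numeral_3_eq_3 Eb_def B_def t_def)
  finally have sx: "sig3 X = tmul (tmul (texp (lvl1 d0)) (texp (lvl1 d1))) (texp (lvl1 d2))" .
  have "pw_linear 3 X" unfolding pw_linear_def
    using t3 aff by blast
  then show ?thesis using sx unfolding Lim_def mem_Collect_eq by (intro exI[of _ X]) simp
qed

lemma Lim1_char: assumes "x \<in> (Lim 1 :: 'd::finite tens set)" shows "\<exists>c. x = texp (lvl1 (c::real^'d))"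
proof -
  obtain c where "x = prodT (\<lambda>j. texp (lvl1 (c j :: real^'d))) 1" using Lim_sub[OF assms] by blast
  then have "x = texp (lvl1 (c 0))" by simp
  then show ?thesis by (intro exI[of _ "c 0"])
qed

lemma texp_lvl1_0: "texp (lvl1 0) = tone"
  by (rule tens_eqI) (simp_all add: texp_def)

lemma Lim_le2: assumes "x \<in> (Lim m :: 'd::finite tens set)" "m \<le> 2"
  shows "\<exists>a b. x = tmul (texp (lvl1 (a::real^'d))) (texp (lvl1 b))"
proof -
  obtain c where x: "x = prodT (\<lambda>j. texp (lvl1 (c j :: real^'d))) m" using Lim_sub[OF assms(1)] by blast
  consider "m = 0" | "m = 1" | "m = 2" using assms(2) by linarith
  then show ?thesis
  proof cases
    case 1
    then have "x = tmul (texp (lvl1 (0::real^'d))) (texp (lvl1 0))" using x by (simp add: texp_lvl1_0)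
    then show ?thesis by blast
  next
    case 2
    then have "x = tmul (texp (lvl1 (c 0))) (texp (lvl1 0))" using x by (simp add: texp_lvl1_0)
    then show ?thesis by blast
  next
    case 3
    then have "x = tmul (texp (lvl1 (c 0))) (texp (lvl1 (c 1)))" using x by (simp add: numeral_2_eq_2)
    then show ?thesis by blast
  qed
qed

theorem lemma8p5:
  assumes "CARD('d::finite) \<ge> 2"
  shows "Bd3 [1, 1] TYPE('d) = 3"
proof -
  obtain i j :: 'd where ij: "i \<noteq> j"
  proof -
    have "\<not> (\<forall>i j::'d. i = j)"
    proof
      assume all: "\<forall>i j::'d. i = j"
      then have "(UNIV::'d set) \<subseteq> {undefined}" by auto
      then have "CARD('d) \<le> card {undefined::'d}" by (intro card_mono) auto
      then show False using assms by simp
    qed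
    then show ?thesis using that by blast
  qed
  define S where "S = {xs. length xs = length [1::nat, 1] \<and>
        (\<forall>k<length [1::nat, 1]. xs ! k \<in> (Lim ([1::nat, 1] ! k) :: 'd tens set))}"
  have B: "Bd3 [1, 1] TYPE('d) = (LEAST m. bary ` S \<subseteq> (Lim m :: 'd tens set))"
    by (simp add: Bd3_def S_def)
  have up: "bary ` S \<subseteq> (Lim 3 :: 'd tens set)"
  proof
    fix y assume "y \<in> bary ` S"
    then obtain xs where xs: "xs \<in> S" and y: "y = bary xs" by blast
    have len: "length xs = 2" and x0: "xs ! 0 \<in> (Lim 1 :: 'd tens set)" and x1: "xs ! 1 \<in> (Lim 1 :: 'd tens set)"
      using xs by (auto simp: S_def)
    obtain c1 :: "real^'d" where c1: "xs ! 0 = texp (lvl1 c1)" using Lim1_char[OF x0] by blast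
    obtain c2 :: "real^'d" where c2: "xs ! 1 = texp (lvl1 c2)" using Lim1_char[OF x1] by blast
    have "xs = [xs ! 0, xs ! 1]"
      using len by (intro nth_equalityI) (auto simp: less_2_cases_iff nth_Cons')
    then have "y = bary [texp (lvl1 c1), texp (lvl1 c2)]" using y c1 c2 by simp
    also have "\<dots> = Pt c1 c2" by (rule bary_lvl1)
    finally show "y \<in> Lim 3" unfolding Pt_def using Lim3 by simp
  qed
  have low: "3 \<le> m" if sub: "bary ` S \<subseteq> (Lim m :: 'd tens set)" for m
  proof (rule ccontr)
    assume "\<not> 3 \<le> m"
    then have m2: "m \<le> 2" by simp
    let ?xs = "[texp (lvl1 (ev i)), texp (lvl1 (ev j))]"
    have "?xs \<in> S" unfolding S_def using Lim1[of "ev i"] Lim1[of "ev j"] by (auto simp: less_Suc_eq)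
    then have "bary ?xs \<in> (Lim m :: 'd tens set)" using sub by blast
    then have "Pt (ev i) (ev j) \<in> (Lim m :: 'd tens set)" by (simp add: bary_lvl1)
    then obtain a b :: "real^'d" where "Pt (ev i) (ev j) = tmul (texp (lvl1 a)) (texp (lvl1 b))"
      using Lim_le2[OF _ m2] by blast
    then show False using no2[OF ij] by blast
  qed
  show ?thesis unfolding B
    by (rule Least_equality, rule up, rule low)
qed

end
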